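(* Let $(X,T)$ be a topological dynamical system and $f\in C(X,\mathbb{R})$. Then for each $x\in X$ and $\epsilon>0$, $$P_s(T,f,x,\epsilon)=\sup_{\mathcal{U}\in\mathcal{C}_X^o}\limsup_{n\to+\infty}\frac1n\log P_n(T,f,\mathcal{U},T^{-n}W^s_\epsilon(x,T)).$$
   Context: A TDS is a compact metric space $(X,d)$ with a homeomorphism $T$. $W^s_\epsilon(x,T)=\{y: d(T^nx,T^ny)\le\epsilon\ \forall n\ge0\}$. $f_n=\sum_{i=0}^{n-1}f\circ T^i$, $d_n(x,y)=\max_{0\le i<n}d(T^ix,T^iy)$, $P_n(T,f,\delta,K)=\sup\sum_{x\in E}\exp f_n(x)$ over $E\subseteq K$ with distinct points at $d_n$-distance $>\delta$, and $P_s(T,f,x,\epsilon)=\lim_{\delta\to0}\limsup_n\frac1n\log P_n(T,f,\delta,T^{-n}W^s_\epsilon(x,T))$. $\mathcal{C}_X$ = finite Borel covers, $\mathcal{C}^o_X$ = finite open covers; $\mathcal{V}\succeq\mathcal{U}$ means refinement; $\mathcal{U}_0^{n-1}=\bigvee_{i=0}^{n-1}T^{-i}\mathcal{U}$; $P_n(T,f,\mathcal{U},K)=\inf\{\sum_{V\in\mathcal{V}}\sup_{x\in V\cap K}\exp f_n(x):\mathcal{V}\in\mathcal{C}_X,\mathcal{V}\succeq\mathcal{U}_0^{n-1}\}$ (empty intersections contribute $0$). *)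

theory Defs
  imports "HOL-Analysis.Analysis"
begin

definition TDS :: "'a::metric_space set \<Rightarrow> ('a \<Rightarrow> 'a) \<Rightarrow> bool" where
  "TDS X T \<longleftrightarrow> compact X \<and> (\<exists>g. homeomorphism X X T g)"

definition preim :: "'a set \<Rightarrow> ('a \<Rightarrow> 'a) \<Rightarrow> nat \<Rightarrow> 'a set \<Rightarrow> 'a set" where
  "preim X T n K = {y \<in> X. (T ^^ n) y \<in> K}"

definition stable_set :: "'a::metric_space set \<Rightarrow> ('a \<Rightarrow> 'a) \<Rightarrow> real \<Rightarrow> 'a \<Rightarrow> 'a set" where
  "stable_set X T \<epsilon> x = {y \<in> X. \<forall>n. dist ((T ^^ n) x) ((T ^^ n) y) \<le> \<epsilon>}"

definition birk :: "('a \<Rightarrow> 'a) \<Rightarrow> ('a \<Rightarrow> real) \<Rightarrow> nat \<Rightarrow> 'a \<Rightarrow> real" where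
  "birk T f n x = (\<Sum>i<n. f ((T ^^ i) x))"

text \<open>Bowen metric d_n (used for n \<ge> 1).\<close>
definition bowen_dist :: "('a::metric_space \<Rightarrow> 'a) \<Rightarrow> nat \<Rightarrow> 'a \<Rightarrow> 'a \<Rightarrow> real" where
  "bowen_dist T n x y = Max ((\<lambda>i. dist ((T ^^ i) x) ((T ^^ i) y)) ` {..<n})"

definition separated :: "('a::metric_space \<Rightarrow> 'a) \<Rightarrow> nat \<Rightarrow> real \<Rightarrow> 'a set \<Rightarrow> bool" where
  "separated T n \<delta> E \<longleftrightarrow> (\<forall>x\<in>E. \<forall>y\<in>E. x \<noteq> y \<longrightarrow> bowen_dist T n x y > \<delta>)"

definition Pn_sep :: "('a::metric_space \<Rightarrow> 'a) \<Rightarrow> ('a \<Rightarrow> real) \<Rightarrow> nat \<Rightarrow> real \<Rightarrow> 'a set \<Rightarrow> real" where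
  "Pn_sep T f n \<delta> K = Sup {(\<Sum>x\<in>E. exp (birk T f n x)) | E. finite E \<and> E \<subseteq> K \<and> separated T n \<delta> E}"

definition Ps :: "'a::metric_space set \<Rightarrow> ('a \<Rightarrow> 'a) \<Rightarrow> ('a \<Rightarrow> real) \<Rightarrow> 'a \<Rightarrow> real \<Rightarrow> ereal" where
  "Ps X T f x \<epsilon> = Lim (at_right (0::real))
     (\<lambda>\<delta>. limsup (\<lambda>n. ereal (ln (Pn_sep T f n \<delta> (preim X T n (stable_set X T \<epsilon> x))) / real n)))"

definition borel_covers :: "'a::topological_space set \<Rightarrow> 'a set set set" where
  "borel_covers X = {C. finite C \<and> (\<forall>A\<in>C. A \<in> sets borel \<and> A \<subseteq> X) \<and> \<Union>C = X}"

definition open_covers :: "'a::topological_space set \<Rightarrow> 'a set set set" where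
  "open_covers X = {C. finite C \<and> (\<forall>A\<in>C. openin (top_of_set X) A) \<and> \<Union>C = X}"

definition refines :: "'a set set \<Rightarrow> 'a set set \<Rightarrow> bool" where
  "refines V U \<longleftrightarrow> (\<forall>A\<in>V. \<exists>B\<in>U. A \<subseteq> B)"

definition join_cover :: "'a set \<Rightarrow> ('a \<Rightarrow> 'a) \<Rightarrow> nat \<Rightarrow> 'a set set \<Rightarrow> 'a set set" where
  "join_cover X T n U = {X \<inter> (\<Inter>i<n. preim X T i (g i)) | g. \<forall>i<n. g i \<in> U}"

definition sup_exp :: "('a \<Rightarrow> 'a) \<Rightarrow> ('a \<Rightarrow> real) \<Rightarrow> nat \<Rightarrow> 'a set \<Rightarrow> real" where
  "sup_exp T f n A = (if A = {} then 0 else Sup ((\<lambda>x. exp (birk T f n x)) ` A))"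

definition Pn_cov :: "'a::topological_space set \<Rightarrow> ('a \<Rightarrow> 'a) \<Rightarrow> ('a \<Rightarrow> real) \<Rightarrow> nat \<Rightarrow> 'a set set \<Rightarrow> 'a set \<Rightarrow> real" where
  "Pn_cov X T f n U K = Inf {(\<Sum>V\<in>C. sup_exp T f n (V \<inter> K)) | C.
      C \<in> borel_covers X \<and> refines C (join_cover X T n U)}"

end

theory Submission
  imports Defs
begin

lemma funpow_props:
  assumes cT: "continuous_on X T" and TX: "T ` X \<subseteq> X"
  shows "continuous_on X (T ^^ i) \<and> (T ^^ i) ` X \<subseteq> X"
proof (induction i)
  case 0 then show ?case by (simp add: continuous_on_id)
next
  case (Suc i)
  then have c: "continuous_on X (T ^^ i)" and s: "(T ^^ i) ` X \<subseteq> X" by auto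
  have "continuous_on X (T \<circ> (T ^^ i))"
    by (rule continuous_on_compose[OF c continuous_on_subset[OF cT s]])
  moreover have "(T \<circ> (T ^^ i)) ` X \<subseteq> X" using s TX by auto
  ultimately show ?case by simp
qed

lemma join_finite:
  assumes "finite U"
  shows "finite (join_cover X T n U)"
proof -
  have "join_cover X T n U \<subseteq> (\<lambda>g. X \<inter> (\<Inter>i<n. preim X T i (g i))) ` (PiE {..<n} (\<lambda>_. U))"
  proof
    fix J assume "J \<in> join_cover X T n U"
    then obtain g where J: "J = X \<inter> (\<Inter>i<n. preim X T i (g i))" and g: "\<forall>i<n. g i \<in> U"
      unfolding join_cover_def by auto
    have "restrict g {..<n} \<in> PiE {..<n} (\<lambda>_. U)" using g by auto
    moreover have "J = X \<inter> (\<Inter>i<n. preim X T i (restrict g {..<n} i))" using J by simp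
    ultimately show "J \<in> (\<lambda>g. X \<inter> (\<Inter>i<n. preim X T i (g i))) ` (PiE {..<n} (\<lambda>_. U))" by blast
  qed
  moreover have "finite (PiE {..<n} (\<lambda>_. U))" using assms by (simp add: finite_PiE)
  ultimately show ?thesis by (meson finite_surj)
qed

lemma join_union:
  assumes TX: "T ` X \<subseteq> X" and U: "\<Union>U = X"
  shows "\<Union>(join_cover X T n U) = X"
proof
  show "\<Union>(join_cover X T n U) \<subseteq> X" unfolding join_cover_def by auto
  show "X \<subseteq> \<Union>(join_cover X T n U)"
  proof
    fix y assume y: "y \<in> X"
    have iX: "(T ^^ i) y \<in> X" for i
    proof (induction i)
      case 0 then show ?case using y by simp
    next
      case (Suc i) then show ?case using TX by auto
    qed
    define g where "g i = (SOME A. A \<in> U \<and> (T ^^ i) y \<in> A)" for i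
    have g: "g i \<in> U \<and> (T ^^ i) y \<in> g i" for i
      unfolding g_def by (rule someI_ex) (use iX U in blast)
    have "y \<in> X \<inter> (\<Inter>i<n. preim X T i (g i))" using g y unfolding preim_def by auto
    moreover have "X \<inter> (\<Inter>i<n. preim X T i (g i)) \<in> join_cover X T n U"
      unfolding join_cover_def using g by blast
    ultimately show "y \<in> \<Union>(join_cover X T n U)" by blast
  qed
qed

lemma join_borel:
  fixes X :: "'a::metric_space set"
  assumes cX: "compact X" and cT: "continuous_on X T" and TX: "T ` X \<subseteq> X"
    and U: "U \<in> open_covers X"
  shows "join_cover X T n U \<in> borel_covers X"
proof -
  have fin: "finite U" and uo: "\<forall>A\<in>U. openin (top_of_set X) A" and uu: "\<Union>U = X"
    using U unfolding open_covers_def by auto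
  have "J \<in> sets borel \<and> J \<subseteq> X" if Jj: "J \<in> join_cover X T n U" for J
  proof -
    obtain g where J: "J = X \<inter> (\<Inter>i<n. preim X T i (g i))" and g: "\<forall>i<n. g i \<in> U"
      using Jj unfolding join_cover_def by auto
    have op: "openin (top_of_set X) (preim X T i (g i))" if "i < n" for i
    proof -
      have fp: "continuous_on X (T ^^ i)" "(T ^^ i) ` X \<subseteq> X" using funpow_props[OF cT TX] by auto
      have "openin (top_of_set X) (X \<inter> (T ^^ i) -` g i)"
      proof -
        have "T ^^ i \<in> X \<rightarrow> X" using fp(2) by auto
        then show ?thesis using fp(1) continuous_on_open_gen[of "T ^^ i" X X] uo g that by auto
      qed
      moreover have "X \<inter> (T ^^ i) -` g i = preim X T i (g i)" unfolding preim_def by auto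
      ultimately show ?thesis by simp
    qed
    have "J = \<Inter>(insert X ((\<lambda>i. preim X T i (g i)) ` {..<n}))" using J by auto
    moreover have "openin (top_of_set X) (\<Inter>(insert X ((\<lambda>i. preim X T i (g i)) ` {..<n})))"
      by (rule openin_Inter) (use op in auto)
    ultimately have "openin (top_of_set X) J" by simp
    then obtain Op where "open Op" "J = X \<inter> Op" by (meson openin_open)
    moreover have "closed X" using cX by (simp add: compact_imp_closed)
    ultimately show ?thesis by (simp add: borel_closed borel_open sets.Int)
  qed
  then show ?thesis unfolding borel_covers_def
    using join_finite[OF fin] join_union[OF TX uu] by auto
qed


lemma iter_in:
  assumes TX: "T ` X \<subseteq> X" and "y \<in> X" shows "(T ^^ i) y \<in> X"
  by (induction i) (use assms in auto)

lemma birk_bound: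
  assumes TX: "T ` X \<subseteq> X" and M: "\<forall>y\<in>X. \<bar>f y\<bar> \<le> M" and y: "y \<in> X"
  shows "birk T f n y \<le> real n * M" "- (real n * M) \<le> birk T f n y"
proof -
  have "\<bar>f ((T ^^ i) y)\<bar> \<le> M" for i using M iter_in[OF TX y] by auto
  then have a: "f ((T ^^ i) y) \<le> M" "- M \<le> f ((T ^^ i) y)" for i
    using \<open>\<And>i. \<bar>f ((T ^^ i) y)\<bar> \<le> M\<close>[of i] by linarith+
  have "birk T f n y \<le> (\<Sum>i<n. M)" unfolding birk_def by (rule sum_mono) (use a in auto)
  then show "birk T f n y \<le> real n * M" by simp
  have "(\<Sum>i<n. - M) \<le> birk T f n y" unfolding birk_def by (rule sum_mono) (use a in auto)
  then show "- (real n * M) \<le> birk T f n y" by simp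
qed

lemma se_bdd:
  assumes TX: "T ` X \<subseteq> X" and M: "\<forall>y\<in>X. \<bar>f y\<bar> \<le> M" and A: "A \<subseteq> X"
  shows "bdd_above ((\<lambda>y. exp (birk T f n y)) ` A)"
proof -
  have "exp (birk T f n y) \<le> exp (real n * M)" if "y \<in> A" for y
    using birk_bound(1)[OF TX M] A that by auto
  then show ?thesis by (rule bdd_aboveI2)
qed

lemma se_ge:
  assumes TX: "T ` X \<subseteq> X" and M: "\<forall>y\<in>X. \<bar>f y\<bar> \<le> M" and A: "A \<subseteq> X" and y: "y \<in> A"
  shows "exp (birk T f n y) \<le> sup_exp T f n A"
  unfolding sup_exp_def using y by (auto intro!: cSup_upper se_bdd[OF TX M A])

lemma se_nonneg:
  assumes TX: "T ` X \<subseteq> X" and M: "\<forall>y\<in>X. \<bar>f y\<bar> \<le> M" and A: "A \<subseteq> X"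
  shows "0 \<le> sup_exp T f n A"
proof (cases "A = {}")
  case True then show ?thesis by (simp add: sup_exp_def)
next
  case False
  then obtain y where "y \<in> A" by auto
  have "0 \<le> exp (birk T f n y)" by simp
  also have "\<dots> \<le> sup_exp T f n A" by (rule se_ge[OF TX M A \<open>y \<in> A\<close>])
  finally show ?thesis .
qed

lemma se_le:
  assumes "\<forall>y\<in>A. exp (birk T f n y) \<le> c" and "0 \<le> c"
  shows "sup_exp T f n A \<le> c"
  unfolding sup_exp_def using assms by (auto intro!: cSup_least)

definition fineU :: "'a::metric_space set set \<Rightarrow> real \<Rightarrow> bool" where
  "fineU U \<delta> \<longleftrightarrow> (\<forall>A\<in>U. \<forall>a\<in>A. \<forall>b\<in>A. dist a b < \<delta>)"

lemma fine_cover_exists: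
  fixes X :: "'a::metric_space set"
  assumes "compact X" and "\<delta> > 0"
  shows "\<exists>U\<in>open_covers X. fineU U \<delta>"
proof -
  have "X \<subseteq> \<Union>((\<lambda>z. ball z (\<delta>/2)) ` X)" using assms(2) by auto
  then obtain D where D: "D \<subseteq> X" "finite D" "X \<subseteq> \<Union>((\<lambda>z. ball z (\<delta>/2)) ` D)"
    using compactE_image[OF assms(1), of X "\<lambda>z. ball z (\<delta>/2)"] by auto
  let ?U = "(\<lambda>z. X \<inter> ball z (\<delta>/2)) ` D"
  have "?U \<in> open_covers X" unfolding open_covers_def using D
    by (auto simp: openin_open_Int)
  moreover have "fineU ?U \<delta>" unfolding fineU_def
  proof (intro ballI)
    fix A a b assume "A \<in> ?U" "a \<in> A" "b \<in> A"
    then obtain z where "dist z a < \<delta>/2" "dist z b < \<delta>/2" by auto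
    moreover have "dist a b \<le> dist a z + dist z b" by (rule dist_triangle)
    ultimately show "dist a b < \<delta>" by (simp add: dist_commute)
  qed
  ultimately show ?thesis by blast
qed

lemma join_diam:
  assumes U: "fineU U \<delta>" and J: "J \<in> join_cover X T n U" and n: "n \<ge> 1"
    and y: "y \<in> J" and z: "z \<in> J"
  shows "bowen_dist T n y z < \<delta>"
proof -
  obtain g where J: "J = X \<inter> (\<Inter>i<n. preim X T i (g i))" and g: "\<forall>i<n. g i \<in> U"
    using J unfolding join_cover_def by auto
  have "dist ((T ^^ i) y) ((T ^^ i) z) < \<delta>" if "i < n" for i
  proof -
    have "(T ^^ i) y \<in> g i" "(T ^^ i) z \<in> g i" using y z J that unfolding preim_def by auto
    then show ?thesis using U g that unfolding fineU_def by auto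
  qed
  moreover have "{..<n} \<noteq> {}" using n by (simp add: lessThan_empty_iff)
  ultimately show ?thesis unfolding bowen_dist_def by (subst Max_less_iff) auto
qed

lemma sep_inj:
  assumes U: "fineU U \<delta>" and n: "n \<ge> 1"
    and C: "C \<in> borel_covers X" and R: "refines C (join_cover X T n U)"
    and E: "E \<subseteq> X" and S: "separated T n \<delta> E"
  shows "\<exists>h. inj_on h E \<and> h ` E \<subseteq> C \<and> (\<forall>y\<in>E. y \<in> h y)"
proof -
  have cov: "\<Union>C = X" using C unfolding borel_covers_def by auto
  define h where "h y = (SOME V. V \<in> C \<and> y \<in> V)" for y
  have h: "h y \<in> C \<and> y \<in> h y" if "y \<in> E" for y
    unfolding h_def by (rule someI_ex) (use that E cov in blast)
  have "inj_on h E"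
  proof (rule inj_onI)
    fix a b assume a: "a \<in> E" and b: "b \<in> E" and eq: "h a = h b"
    obtain J where J: "J \<in> join_cover X T n U" "h a \<subseteq> J" using R h[OF a] unfolding refines_def by blast
    have "a \<in> J" "b \<in> J" using h[OF a] h[OF b] eq J by auto
    then have "bowen_dist T n a b < \<delta>" using join_diam[OF U J(1) n] by auto
    then show "a = b" using S a b unfolding separated_def by force
  qed
  then show ?thesis using h by blast
qed


lemma sep_le_cov_sum:
  assumes TX: "T ` X \<subseteq> X" and M: "\<forall>y\<in>X. \<bar>f y\<bar> \<le> M" and K: "K \<subseteq> X"
    and U: "fineU U \<delta>" and n: "n \<ge> 1"
    and C: "C \<in> borel_covers X" and R: "refines C (join_cover X T n U)"
    and E: "finite E" "E \<subseteq> K" and S: "separated T n \<delta> E"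
  shows "(\<Sum>y\<in>E. exp (birk T f n y)) \<le> (\<Sum>V\<in>C. sup_exp T f n (V \<inter> K))"
proof -
  obtain h where h: "inj_on h E" "h ` E \<subseteq> C" "\<forall>y\<in>E. y \<in> h y"
    using sep_inj[OF U n C R] E K S by (meson order_trans)
  have finC: "finite C" and CX: "\<forall>V\<in>C. V \<subseteq> X" using C unfolding borel_covers_def by auto
  have "(\<Sum>y\<in>E. exp (birk T f n y)) \<le> (\<Sum>y\<in>E. sup_exp T f n (h y \<inter> K))"
    by (rule sum_mono, rule se_ge[OF TX M]) (use h E K in auto)
  also have "\<dots> = (\<Sum>V\<in>h ` E. sup_exp T f n (V \<inter> K))"
    by (simp add: sum.reindex[OF h(1)])
  also have "\<dots> \<le> (\<Sum>V\<in>C. sup_exp T f n (V \<inter> K))"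
    by (rule sum_mono2[OF finC h(2)]) (use se_nonneg[OF TX M] CX in blast)
  finally show ?thesis .
qed

lemma covers_ne:
  fixes X :: "'a::metric_space set"
  assumes cX: "compact X" and cT: "continuous_on X T" and TX: "T ` X \<subseteq> X"
    and U: "U \<in> open_covers X"
  shows "{(\<Sum>V\<in>C. sup_exp T f n (V \<inter> K)) | C. C \<in> borel_covers X \<and> refines C (join_cover X T n U)} \<noteq> {}"
  using join_borel[OF cX cT TX U] by (auto simp: refines_def)

lemma covers_bdd_below:
  assumes TX: "T ` X \<subseteq> X" and M: "\<forall>y\<in>X. \<bar>f y\<bar> \<le> M"
  shows "bdd_below {(\<Sum>V\<in>C. sup_exp T f n (V \<inter> K)) | C. C \<in> borel_covers X \<and> refines C (join_cover X T n U)}"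
proof (rule bdd_belowI)
  fix s assume "s \<in> {(\<Sum>V\<in>C. sup_exp T f n (V \<inter> K)) | C. C \<in> borel_covers X \<and> refines C (join_cover X T n U)}"
  then obtain C where s: "s = (\<Sum>V\<in>C. sup_exp T f n (V \<inter> K))" and C: "C \<in> borel_covers X" by auto
  have "\<forall>V\<in>C. V \<subseteq> X" using C unfolding borel_covers_def by auto
  then show "0 \<le> s" unfolding s by (intro sum_nonneg se_nonneg[OF TX M]) auto
qed

lemma sep_le_Pncov:
  fixes X :: "'a::metric_space set"
  assumes cX: "compact X" and cT: "continuous_on X T" and TX: "T ` X \<subseteq> X"
    and M: "\<forall>y\<in>X. \<bar>f y\<bar> \<le> M" and K: "K \<subseteq> X"
    and U: "U \<in> open_covers X" "fineU U \<delta>" and n: "n \<ge> 1"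
    and E: "finite E" "E \<subseteq> K" and S: "separated T n \<delta> E"
  shows "(\<Sum>y\<in>E. exp (birk T f n y)) \<le> Pn_cov X T f n U K"
  unfolding Pn_cov_def
  by (rule cInf_greatest[OF covers_ne[OF cX cT TX U(1)]])
     (use sep_le_cov_sum[OF TX M K U(2) n _ _ E S] in auto)

lemma Pnsep_le:
  fixes X :: "'a::metric_space set"
  assumes cX: "compact X" and cT: "continuous_on X T" and TX: "T ` X \<subseteq> X"
    and M: "\<forall>y\<in>X. \<bar>f y\<bar> \<le> M" and K: "K \<subseteq> X"
    and U: "U \<in> open_covers X" "fineU U \<delta>" and n: "n \<ge> 1"
  shows "Pn_sep T f n \<delta> K \<le> Pn_cov X T f n U K"
  unfolding Pn_sep_def
proof (rule cSup_least)
  have "separated T n \<delta> {}" by (simp add: separated_def)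
  then show "{\<Sum>x\<in>E. exp (birk T f n x) |E. finite E \<and> E \<subseteq> K \<and> separated T n \<delta> E} \<noteq> {}" by blast
qed (use sep_le_Pncov[OF cX cT TX M K U n] in auto)

lemma Pnsep_bdd:
  fixes X :: "'a::metric_space set"
  assumes cX: "compact X" and cT: "continuous_on X T" and TX: "T ` X \<subseteq> X"
    and M: "\<forall>y\<in>X. \<bar>f y\<bar> \<le> M" and K: "K \<subseteq> X" and d: "\<delta> > 0" and n: "n \<ge> 1"
  shows "bdd_above {\<Sum>x\<in>E. exp (birk T f n x) |E. finite E \<and> E \<subseteq> K \<and> separated T n \<delta> E}"
proof -
  obtain U where U: "U \<in> open_covers X" "fineU U \<delta>" using fine_cover_exists[OF cX d] by blast
  show ?thesis by (rule bdd_aboveI[where M = "Pn_cov X T f n U K"])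
    (use sep_le_Pncov[OF cX cT TX M K U n] in auto)
qed

lemma Pnsep_ge:
  fixes X :: "'a::metric_space set"
  assumes cX: "compact X" and cT: "continuous_on X T" and TX: "T ` X \<subseteq> X"
    and M: "\<forall>y\<in>X. \<bar>f y\<bar> \<le> M" and K: "K \<subseteq> X" and d: "\<delta> > 0" and n: "n \<ge> 1"
    and E: "finite E" "E \<subseteq> K" and S: "separated T n \<delta> E"
  shows "(\<Sum>x\<in>E. exp (birk T f n x)) \<le> Pn_sep T f n \<delta> K"
  unfolding Pn_sep_def by (rule cSup_upper[OF _ Pnsep_bdd[OF cX cT TX M K d n]]) (use E S in auto)

lemma Pnsep_pos:
  fixes X :: "'a::metric_space set"
  assumes cX: "compact X" and cT: "continuous_on X T" and TX: "T ` X \<subseteq> X"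
    and M: "\<forall>y\<in>X. \<bar>f y\<bar> \<le> M" and K: "K \<subseteq> X" and d: "\<delta> > 0" and n: "n \<ge> 1"
    and Kne: "y \<in> K"
  shows "0 < Pn_sep T f n \<delta> K"
proof -
  have "separated T n \<delta> {y}" by (simp add: separated_def)
  then have "(\<Sum>x\<in>{y}. exp (birk T f n x)) \<le> Pn_sep T f n \<delta> K"
    using Pnsep_ge[OF cX cT TX M K d n, of "{y}"] Kne by auto
  then have "exp (birk T f n y) \<le> Pn_sep T f n \<delta> K" by simp
  moreover have "0 < exp (birk T f n y)" by simp
  ultimately show ?thesis by (metis exp_gt_zero less_le_trans)
qed

lemma Pncov_pos:
  fixes X :: "'a::metric_space set"
  assumes cX: "compact X" and cT: "continuous_on X T" and TX: "T ` X \<subseteq> X"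
    and M: "\<forall>y\<in>X. \<bar>f y\<bar> \<le> M" and K: "K \<subseteq> X" and U: "U \<in> open_covers X"
    and Kne: "y \<in> K"
  shows "0 < Pn_cov X T f n U K"
proof -
  have "exp (birk T f n y) \<le> Pn_cov X T f n U K"
    unfolding Pn_cov_def
  proof (rule cInf_greatest[OF covers_ne[OF cX cT TX U]])
    fix s assume "s \<in> {(\<Sum>V\<in>C. sup_exp T f n (V \<inter> K)) | C. C \<in> borel_covers X \<and> refines C (join_cover X T n U)}"
    then obtain C where s: "s = (\<Sum>V\<in>C. sup_exp T f n (V \<inter> K))" and C: "C \<in> borel_covers X" by auto
    have CX: "\<forall>V\<in>C. V \<subseteq> X" and finC: "finite C" and cov: "\<Union>C = X"
      using C unfolding borel_covers_def by auto
    obtain V where V: "V \<in> C" "y \<in> V" using cov Kne K by blast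
    have "exp (birk T f n y) \<le> sup_exp T f n (V \<inter> K)"
      by (rule se_ge[OF TX M]) (use V CX Kne in auto)
    also have "\<dots> \<le> s" unfolding s
    proof (rule member_le_sum[OF V(1)])
      fix W assume "W \<in> C - {V}"
      then show "0 \<le> sup_exp T f n (W \<inter> K)" using se_nonneg[OF TX M] CX by blast
    qed (use finC in auto)
    finally show "exp (birk T f n y) \<le> s" .
  qed
  moreover have "0 < exp (birk T f n y)" by simp
  ultimately show ?thesis by linarith
qed


lemma lebesgue_U:
  fixes X :: "'a::metric_space set"
  assumes cX: "compact X" and U: "U \<in> open_covers X"
  shows "\<exists>e>0. \<forall>z\<in>X. \<forall>\<delta>. 0 \<le> \<delta> \<and> \<delta> < e \<longrightarrow> (\<exists>A\<in>U. X \<inter> cball z \<delta> \<subseteq> A)"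
proof -
  have uo: "\<forall>A\<in>U. openin (top_of_set X) A" and uu: "\<Union>U = X"
    using U unfolding open_covers_def by auto
  let ?G = "{Op. open Op \<and> X \<inter> Op \<in> U}"
  have "X \<subseteq> \<Union>?G"
  proof
    fix z assume "z \<in> X"
    then obtain A where A: "A \<in> U" "z \<in> A" using uu by blast
    then obtain Op where "open Op" "A = X \<inter> Op" using uo by (meson openin_open)
    then show "z \<in> \<Union>?G" using A by blast
  qed
  then obtain e where e: "0 < e" "\<And>z. z \<in> X \<Longrightarrow> \<exists>G\<in>?G. ball z e \<subseteq> G"
    using Heine_Borel_lemma[OF cX, of ?G] by blast
  have "\<exists>A\<in>U. X \<inter> cball z \<delta> \<subseteq> A" if "z \<in> X" "0 \<le> \<delta>" "\<delta> < e" for z \<delta>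
  proof -
    from e(2)[OF that(1)] obtain G where G: "open G" "X \<inter> G \<in> U" "ball z e \<subseteq> G" by blast
    have "cball z \<delta> \<subseteq> ball z e" using that by auto
    then show ?thesis using G by blast
  qed
  then show ?thesis using e(1) by blast
qed

lemma bowen_sym: "bowen_dist T n x y = bowen_dist T n y x"
  unfolding bowen_dist_def by (simp add: dist_commute)

lemma max_sep:
  fixes X :: "'a::metric_space set"
  assumes cX: "compact X" and cT: "continuous_on X T" and TX: "T ` X \<subseteq> X"
    and K: "K \<subseteq> X" and d: "\<delta> > 0" and n: "n \<ge> 1"
  shows "\<exists>E. finite E \<and> E \<subseteq> K \<and> separated T n \<delta> E \<and>
     (\<forall>y\<in>K. \<exists>x\<in>E. \<forall>i<n. dist ((T ^^ i) x) ((T ^^ i) y) \<le> \<delta>)"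
proof -
  obtain U where U: "U \<in> open_covers X" "fineU U \<delta>" using fine_cover_exists[OF cX d] by blast
  have JB: "join_cover X T n U \<in> borel_covers X" by (rule join_borel[OF cX cT TX U(1)])
  have JR: "refines (join_cover X T n U) (join_cover X T n U)" by (auto simp: refines_def)
  have finJ: "finite (join_cover X T n U)" using JB unfolding borel_covers_def by auto
  let ?P = "\<lambda>E. finite E \<and> E \<subseteq> K \<and> separated T n \<delta> E"
  have bnd: "\<forall>E. ?P E \<longrightarrow> card E < card (join_cover X T n U) + 1"
  proof (intro allI impI)
    fix E assume PE: "?P E"
    obtain h where "inj_on h E" "h ` E \<subseteq> join_cover X T n U"
      using sep_inj[OF U(2) n JB JR, of E] PE K by auto
    then have "card E \<le> card (join_cover X T n U)" using card_inj_on_le finJ by blast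
    then show "card E < card (join_cover X T n U) + 1" by simp
  qed
  have P0: "?P {}" by (simp add: separated_def)
  obtain E where E: "?P E" and Emax: "\<forall>E'. ?P E' \<longrightarrow> card E' \<le> card E"
    using ex_has_greatest_nat[of ?P "{}" card, OF P0 bnd] by blast
  have "\<exists>x\<in>E. \<forall>i<n. dist ((T ^^ i) x) ((T ^^ i) y) \<le> \<delta>" if y: "y \<in> K" for y
  proof (rule ccontr)
    assume nc: "\<not> ?thesis"
    have yE: "y \<notin> E"
    proof
      assume "y \<in> E"
      moreover have "\<forall>i<n. dist ((T ^^ i) y) ((T ^^ i) y) \<le> \<delta>" using d by simp
      ultimately show False using nc by blast
    qed
    have far: "bowen_dist T n x y > \<delta>" if xE: "x \<in> E" for x
    proof -
      obtain i where i: "i < n" "dist ((T ^^ i) x) ((T ^^ i) y) > \<delta>" using nc xE by (auto simp: not_le)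
      have "dist ((T ^^ i) x) ((T ^^ i) y) \<le> bowen_dist T n x y"
        unfolding bowen_dist_def by (rule Max_ge) (use i in auto)
      then show ?thesis using i by linarith
    qed
    have "separated T n \<delta> (insert y E)" unfolding separated_def
    proof (intro ballI impI)
      fix a b assume a: "a \<in> insert y E" and b: "b \<in> insert y E" and ab: "a \<noteq> b"
      show "bowen_dist T n a b > \<delta>"
      proof (cases "a = y")
        case True
        then have "b \<in> E" using b ab by auto
        then show ?thesis using far[of b] True bowen_sym[of T n y b] by simp
      next
        case False
        then have aE: "a \<in> E" using a by auto
        show ?thesis
        proof (cases "b = y")
          case True then show ?thesis using far[OF aE] by simp
        next
          case False
          then have "b \<in> E" using b by auto
          then show ?thesis using E aE ab unfolding separated_def by blast
        qed
      qed
    qed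
    then have "?P (insert y E)" using E y by auto
    then have "card (insert y E) \<le> card E" using Emax by blast
    then show False using yE E by simp
  qed
  then show ?thesis using E by blast
qed


lemma cov_le_sep_fixed:
  fixes X :: "'a::metric_space set"
  assumes cX: "compact X" and cT: "continuous_on X T" and TX: "T ` X \<subseteq> X"
    and M: "\<forall>y\<in>X. \<bar>f y\<bar> \<le> M" and K: "K \<subseteq> X" and U: "U \<in> open_covers X"
    and n: "n \<ge> 1" and d: "\<delta> > 0"
    and Leb: "\<forall>z\<in>X. \<exists>A\<in>U. X \<inter> cball z \<delta> \<subseteq> A"
    and UC: "\<forall>a\<in>X. \<forall>b\<in>X. dist a b \<le> \<delta> \<longrightarrow> f b \<le> f a + \<eta>"
  shows "Pn_cov X T f n U K \<le> exp (real n * \<eta>) * Pn_sep T f n \<delta> K"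
proof -
  obtain E where E: "finite E" "E \<subseteq> K" "separated T n \<delta> E"
    and Ecov: "\<forall>y\<in>K. \<exists>x\<in>E. \<forall>i<n. dist ((T ^^ i) x) ((T ^^ i) y) \<le> \<delta>"
    using max_sep[OF cX cT TX K d n] by blast
  have EX: "E \<subseteq> X" using E K by auto
  define B where "B x = {z \<in> X. \<forall>i<n. dist ((T ^^ i) x) ((T ^^ i) z) \<le> \<delta>}" for x
  have closedX: "closed X" using cX by (simp add: compact_imp_closed)
  have Bclosed: "closed (B x)" for x
  proof -
    have "B x = X \<inter> (\<Inter>i\<in>{..<n}. X \<inter> (T ^^ i) -` cball ((T ^^ i) x) \<delta>)"
      unfolding B_def by (auto simp: mem_cball)
    moreover have "closed (X \<inter> (T ^^ i) -` cball ((T ^^ i) x) \<delta>)" for i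
      by (rule continuous_closed_preimage) (use funpow_props[OF cT TX] closedX in auto)
    moreover have "closed (\<Inter>i\<in>{..<n}. X \<inter> (T ^^ i) -` cball ((T ^^ i) x) \<delta>)"
      by (rule closed_INT) (use calculation(2) in blast)
    ultimately show ?thesis using closed_Int[OF closedX] by metis
  qed
  have BX: "B x \<subseteq> X" for x unfolding B_def by auto
  let ?J = "join_cover X T n U"
  have JB: "?J \<in> borel_covers X" by (rule join_borel[OF cX cT TX U])
  have finJ: "finite ?J" and JX: "\<forall>J\<in>?J. J \<in> sets borel \<and> J \<subseteq> X" and Jcov: "\<Union>?J = X"
    using JB unfolding borel_covers_def by auto
  have Bsub: "\<exists>J\<in>?J. B x \<subseteq> J" if xX: "x \<in> X" for x
  proof -
    define g where "g i = (SOME A. A \<in> U \<and> X \<inter> cball ((T ^^ i) x) \<delta> \<subseteq> A)" for i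
    have g: "g i \<in> U \<and> X \<inter> cball ((T ^^ i) x) \<delta> \<subseteq> g i" for i
      unfolding g_def by (rule someI_ex) (use Leb iter_in[OF TX xX] in blast)
    have "X \<inter> (\<Inter>i<n. preim X T i (g i)) \<in> ?J" unfolding join_cover_def using g by blast
    moreover have "B x \<subseteq> X \<inter> (\<Inter>i<n. preim X T i (g i))"
    proof
      fix z assume z: "z \<in> B x"
      then have zX: "z \<in> X" using BX by auto
      have "(T ^^ i) z \<in> g i" if "i < n" for i
        using g[of i] z that iter_in[OF TX zX, of i] unfolding B_def by (auto simp: mem_cball)
      then show "z \<in> X \<inter> (\<Inter>i<n. preim X T i (g i))" using zX unfolding preim_def by auto
    qed
    ultimately show ?thesis by blast
  qed
  let ?BU = "\<Union>(B ` E)"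
  let ?R = "(\<lambda>J. J - ?BU) ` ?J"
  let ?C = "B ` E \<union> ?R"
  have BUc: "closed ?BU" using E(1) Bclosed by (intro closed_Union) auto
  have KBU: "K \<subseteq> ?BU"
  proof
    fix y assume y: "y \<in> K"
    then obtain x where "x \<in> E" "\<forall>i<n. dist ((T ^^ i) x) ((T ^^ i) y) \<le> \<delta>" using Ecov by blast
    then show "y \<in> ?BU" using y K unfolding B_def by blast
  qed
  have CBel: "A \<in> sets borel \<and> A \<subseteq> X" if AC: "A \<in> ?C" for A
    using AC
  proof
    assume "A \<in> B ` E" then show ?thesis using Bclosed BX borel_closed by blast
  next
    assume "A \<in> ?R"
    then obtain J where J: "J \<in> ?J" "A = J - ?BU" by blast
    have "?BU \<in> sets borel" using BUc borel_closed by blast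
    then show ?thesis using J JX by auto
  qed
  have CU: "\<Union>?C = X"
  proof
    show "\<Union>?C \<subseteq> X" using BX Jcov by blast
    show "X \<subseteq> \<Union>?C"
    proof
      fix z assume z: "z \<in> X"
      show "z \<in> \<Union>?C"
      proof (cases "z \<in> ?BU")
        case True then show ?thesis by blast
      next
        case False
        obtain J where "J \<in> ?J" "z \<in> J" using Jcov z by blast
        then show ?thesis using False by blast
      qed
    qed
  qed
  have "finite ?C" using E(1) finJ by (intro finite_UnI finite_imageI)
  then have CB: "?C \<in> borel_covers X" unfolding borel_covers_def mem_Collect_eq using CBel CU by (intro conjI ballI) auto
  have CR: "refines ?C ?J" unfolding refines_def
  proof
    fix A assume "A \<in> ?C"
    then show "\<exists>J\<in>?J. A \<subseteq> J"
    proof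
      assume "A \<in> B ` E" then show ?thesis using Bsub EX by blast
    next
      assume "A \<in> ?R" then show ?thesis by blast
    qed
  qed
  have nn: "0 \<le> sup_exp T f n (V \<inter> K)" for V by (rule se_nonneg[OF TX M]) (use K in auto)
  have "Pn_cov X T f n U K \<le> (\<Sum>V\<in>?C. sup_exp T f n (V \<inter> K))"
    unfolding Pn_cov_def by (rule cInf_lower[OF _ covers_bdd_below[OF TX M]]) (use CB CR in blast)
  also have "\<dots> \<le> (\<Sum>V\<in>B ` E. sup_exp T f n (V \<inter> K)) + (\<Sum>V\<in>?R. sup_exp T f n (V \<inter> K))"
  proof -
    have "(\<Sum>V\<in>?C. sup_exp T f n (V \<inter> K)) = (\<Sum>V\<in>B ` E. sup_exp T f n (V \<inter> K)) + (\<Sum>V\<in>?R. sup_exp T f n (V \<inter> K))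
       - (\<Sum>V\<in>B ` E \<inter> ?R. sup_exp T f n (V \<inter> K))"
      by (rule sum_Un) (use E(1) finJ in auto)
    moreover have "0 \<le> (\<Sum>V\<in>B ` E \<inter> ?R. sup_exp T f n (V \<inter> K))" by (rule sum_nonneg) (use nn in auto)
    ultimately show ?thesis by linarith
  qed
  also have "(\<Sum>V\<in>?R. sup_exp T f n (V \<inter> K)) = 0"
  proof (rule sum.neutral, rule ballI)
    fix V assume "V \<in> ?R"
    then have "V \<inter> K = {}" using KBU by blast
    then show "sup_exp T f n (V \<inter> K) = 0" by (simp add: sup_exp_def)
  qed
  also have "(\<Sum>V\<in>B ` E. sup_exp T f n (V \<inter> K)) \<le> (\<Sum>x\<in>E. sup_exp T f n (B x \<inter> K))"
    using sum_image_le[OF E(1), of "\<lambda>V. sup_exp T f n (V \<inter> K)" B] nn by (simp add: o_def)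
  also have "\<dots> \<le> (\<Sum>x\<in>E. exp (real n * \<eta>) * exp (birk T f n x))"
  proof (rule sum_mono, rule se_le)
    fix x assume xE: "x \<in> E"
    then have xX: "x \<in> X" using EX by auto
    show "0 \<le> exp (real n * \<eta>) * exp (birk T f n x)" by simp
    show "\<forall>y\<in>B x \<inter> K. exp (birk T f n y) \<le> exp (real n * \<eta>) * exp (birk T f n x)"
    proof
      fix y assume y: "y \<in> B x \<inter> K"
      then have yX: "y \<in> X" using K by auto
      have "f ((T ^^ i) y) \<le> f ((T ^^ i) x) + \<eta>" if "i < n" for i
        using UC iter_in[OF TX xX, of i] iter_in[OF TX yX, of i] y that unfolding B_def by auto
      then have "birk T f n y \<le> (\<Sum>i<n. f ((T ^^ i) x) + \<eta>)"
        unfolding birk_def by (intro sum_mono) auto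
      also have "\<dots> = birk T f n x + real n * \<eta>" by (simp add: birk_def sum.distrib)
      finally have "exp (birk T f n y) \<le> exp (real n * \<eta> + birk T f n x)" by simp
      then show "exp (birk T f n y) \<le> exp (real n * \<eta>) * exp (birk T f n x)" by (simp add: exp_add)
    qed
  qed
  also have "\<dots> = exp (real n * \<eta>) * (\<Sum>x\<in>E. exp (birk T f n x))" by (simp add: sum_distrib_left)
  also have "\<dots> \<le> exp (real n * \<eta>) * Pn_sep T f n \<delta> K"
    by (rule mult_left_mono[OF Pnsep_ge[OF cX cT TX M K d n E]]) simp
  finally show ?thesis by simp
qed


theorem lemma3p2:
  fixes X :: "'a::metric_space set" and T :: "'a \<Rightarrow> 'a" and f :: "'a \<Rightarrow> real"
    and x :: 'a and \<epsilon> :: real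
  assumes "TDS X T" and "continuous_on X f" and "x \<in> X" and "\<epsilon> > 0"
  shows "Ps X T f x \<epsilon> =
    (SUP U\<in>open_covers X. limsup (\<lambda>n. ereal (ln (Pn_cov X T f n U (preim X T n (stable_set X T \<epsilon> x))) / real n)))"
proof -
  note cf = assms(2) and xX = assms(3)
  obtain g where cX: "compact X" and hom: "homeomorphism X X T g" using assms(1) unfolding TDS_def by blast
  have cT: "continuous_on X T" and TX: "T ` X \<subseteq> X" and gX: "\<forall>y\<in>X. g y \<in> X"
    and Tg: "\<forall>y\<in>X. T (g y) = y"
    using hom unfolding homeomorphism_def by auto
  have "bounded (f ` X)" by (rule compact_imp_bounded[OF compact_continuous_image[OF cf cX]])
  then obtain M where M: "\<forall>y\<in>X. \<bar>f y\<bar> \<le> M" unfolding bounded_iff by auto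
  define K where "K n = preim X T n (stable_set X T \<epsilon> x)" for n
  have KX: "K n \<subseteq> X" for n unfolding K_def preim_def by auto
  have gn: "\<forall>y\<in>X. (g ^^ n) y \<in> X \<and> (T ^^ n) ((g ^^ n) y) = y" for n
  proof (induction n)
    case 0 then show ?case by simp
  next
    case (Suc n)
    show ?case
    proof
      fix y assume y: "y \<in> X"
      have a: "(g ^^ n) (g y) \<in> X" "(T ^^ n) ((g ^^ n) (g y)) = g y" using Suc gX y by auto
      have "(g ^^ Suc n) y = (g ^^ n) (g y)" by (simp add: funpow_Suc_right del: funpow.simps)
      moreover have "(T ^^ Suc n) z = T ((T ^^ n) z)" for z by simp
      ultimately show "(g ^^ Suc n) y \<in> X \<and> (T ^^ Suc n) ((g ^^ Suc n) y) = y"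
        using a Tg gX y by auto
    qed
  qed
  have wK: "(g ^^ n) x \<in> K n" for n
  proof -
    have "x \<in> stable_set X T \<epsilon> x" unfolding stable_set_def using xX assms(4) by auto
    then show ?thesis unfolding K_def preim_def using gn xX by auto
  qed
  define a where "a U n = ereal (ln (Pn_cov X T f n U (K n)) / real n)" for U n
  define s where "s \<delta> n = ereal (ln (Pn_sep T f n \<delta> (K n)) / real n)" for \<delta> n
  define L where "L \<delta> = limsup (s \<delta>)" for \<delta>
  define S where "S = (SUP U\<in>open_covers X. limsup (a U))"
  have PsL: "Ps X T f x \<epsilon> = Lim (at_right 0) L"
    unfolding Ps_def L_def s_def K_def by simp
  have RHS: "(SUP U\<in>open_covers X. limsup (\<lambda>n. ereal (ln (Pn_cov X T f n U (preim X T n (stable_set X T \<epsilon> x))) / real n))) = S"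
    unfolding S_def a_def K_def by simp
  have A: "L \<delta> \<le> S" if d: "\<delta> > 0" for \<delta>
  proof -
    obtain U where U: "U \<in> open_covers X" "fineU U \<delta>" using fine_cover_exists[OF cX d] by blast
    have "eventually (\<lambda>n. s \<delta> n \<le> a U n) sequentially"
    proof (rule eventually_sequentiallyI[of 1])
      fix n :: nat assume n: "n \<ge> 1"
      have p1: "0 < Pn_sep T f n \<delta> (K n)" by (rule Pnsep_pos[OF cX cT TX M KX d n wK])
      have p2: "0 < Pn_cov X T f n U (K n)" by (rule Pncov_pos[OF cX cT TX M KX U(1) wK])
      have "Pn_sep T f n \<delta> (K n) \<le> Pn_cov X T f n U (K n)" by (rule Pnsep_le[OF cX cT TX M KX U n])
      then have "ln (Pn_sep T f n \<delta> (K n)) \<le> ln (Pn_cov X T f n U (K n))" using p1 p2 by simp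
      then have "ln (Pn_sep T f n \<delta> (K n)) / real n \<le> ln (Pn_cov X T f n U (K n)) / real n"
        by (rule divide_right_mono) simp
      then show "s \<delta> n \<le> a U n" unfolding s_def a_def by simp
    qed
    then have "L \<delta> \<le> limsup (a U)" unfolding L_def by (rule Limsup_mono)
    also have "\<dots> \<le> S" unfolding S_def using U(1) by (rule SUP_upper)
    finally show ?thesis .
  qed
  have B: "\<exists>\<delta>0>0. \<forall>\<delta>. 0 < \<delta> \<and> \<delta> < \<delta>0 \<longrightarrow> limsup (a U) \<le> ereal \<eta> + L \<delta>"
    if U: "U \<in> open_covers X" and eta: "\<eta> > 0" for U \<eta>
  proof -
    obtain e where e: "e > 0" "\<forall>z\<in>X. \<forall>\<delta>. 0 \<le> \<delta> \<and> \<delta> < e \<longrightarrow> (\<exists>A\<in>U. X \<inter> cball z \<delta> \<subseteq> A)"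
      using lebesgue_U[OF cX U] by blast
    have "uniformly_continuous_on X f" by (rule compact_uniformly_continuous[OF cf cX])
    then obtain d where d: "d > 0" "\<forall>p\<in>X. \<forall>q\<in>X. dist q p < d \<longrightarrow> dist (f q) (f p) < \<eta>"
      unfolding uniformly_continuous_on_def using eta by blast
    have "\<forall>\<delta>. 0 < \<delta> \<and> \<delta> < min e d \<longrightarrow> limsup (a U) \<le> ereal \<eta> + L \<delta>"
    proof (intro allI impI)
      fix \<delta> assume \<delta>: "0 < \<delta> \<and> \<delta> < min e d"
      have Leb: "\<forall>z\<in>X. \<exists>A\<in>U. X \<inter> cball z \<delta> \<subseteq> A" using e(2) \<delta> by auto
      have UC: "\<forall>p\<in>X. \<forall>q\<in>X. dist p q \<le> \<delta> \<longrightarrow> f q \<le> f p + \<eta>"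
      proof (intro ballI impI)
        fix p q assume p: "p \<in> X" and q: "q \<in> X" and pq: "dist p q \<le> \<delta>"
        then have "dist q p < d" using \<delta> by (simp add: dist_commute)
        then have "dist (f q) (f p) < \<eta>" using d p q by blast
        then show "f q \<le> f p + \<eta>" by (simp add: dist_real_def)
      qed
      have "eventually (\<lambda>n. a U n \<le> ereal \<eta> + s \<delta> n) sequentially"
      proof (rule eventually_sequentiallyI[of 1])
        fix n :: nat assume n: "n \<ge> 1"
        have p1: "0 < Pn_sep T f n \<delta> (K n)" using Pnsep_pos[OF cX cT TX M KX _ n wK] \<delta> by blast
        have p2: "0 < Pn_cov X T f n U (K n)" by (rule Pncov_pos[OF cX cT TX M KX U wK])
        have "Pn_cov X T f n U (K n) \<le> exp (real n * \<eta>) * Pn_sep T f n \<delta> (K n)"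
          by (rule cov_le_sep_fixed[OF cX cT TX M KX U n _ Leb UC]) (use \<delta> in simp)
        then have "ln (Pn_cov X T f n U (K n)) \<le> ln (exp (real n * \<eta>) * Pn_sep T f n \<delta> (K n))"
          using p1 p2 by simp
        also have "\<dots> = real n * \<eta> + ln (Pn_sep T f n \<delta> (K n))" using p1 by (simp add: ln_mult)
        finally have "ln (Pn_cov X T f n U (K n)) / real n \<le> (real n * \<eta> + ln (Pn_sep T f n \<delta> (K n))) / real n"
          by (rule divide_right_mono) simp
        also have "\<dots> = \<eta> + ln (Pn_sep T f n \<delta> (K n)) / real n" using n by (simp add: add_divide_distrib)
        finally show "a U n \<le> ereal \<eta> + s \<delta> n" unfolding a_def s_def by simp
      qed
      then have "limsup (a U) \<le> limsup (\<lambda>n. ereal \<eta> + s \<delta> n)" by (rule Limsup_mono)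
      also have "\<dots> = ereal \<eta> + L \<delta>" unfolding L_def by (rule Limsup_add_ereal_left) simp_all
      finally show "limsup (a U) \<le> ereal \<eta> + L \<delta>" .
    qed
    moreover have "min e d > 0" using e d by simp
    ultimately show ?thesis by blast
  qed
  have tends: "(L \<longlongrightarrow> S) (at_right 0)"
    unfolding order_tendsto_iff
  proof (intro conjI allI impI)
    fix u assume u: "S < u"
    show "eventually (\<lambda>\<delta>. L \<delta> < u) (at_right 0)"
      unfolding eventually_at_right_field
      by (rule exI[of _ 1]) (use A u in \<open>auto intro: le_less_trans\<close>)
  next
    fix l assume l: "l < S"
    then obtain U where U: "U \<in> open_covers X" "l < limsup (a U)"
      unfolding S_def less_SUP_iff by blast
    obtain r0 where r0: "l < ereal r0" "ereal r0 < limsup (a U)" using ereal_dense2[OF U(2)] by blast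
    obtain r1 where r1: "ereal r0 < ereal r1" "ereal r1 < limsup (a U)" using ereal_dense2[OF r0(2)] by blast
    have eta: "r1 - r0 > 0" using r1(1) by simp
    obtain \<delta>0 where \<delta>0: "\<delta>0 > 0" "\<forall>\<delta>. 0 < \<delta> \<and> \<delta> < \<delta>0 \<longrightarrow> limsup (a U) \<le> ereal (r1 - r0) + L \<delta>"
      using B[OF U(1) eta] by blast
    show "eventually (\<lambda>\<delta>. l < L \<delta>) (at_right 0)"
      unfolding eventually_at_right_field
    proof (rule exI[of _ \<delta>0], intro conjI allI impI)
      show "(0::real) < \<delta>0" by (rule \<delta>0(1))
      fix \<delta> :: real assume "0 < \<delta>" "\<delta> < \<delta>0"
      then have le: "limsup (a U) \<le> ereal (r1 - r0) + L \<delta>" using \<delta>0(2) by blast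
      show "l < L \<delta>"
      proof (rule ccontr)
        assume "\<not> l < L \<delta>"
        then have "L \<delta> \<le> l" by simp
        then have "L \<delta> \<le> ereal r0" using r0(1) by simp
        then have "ereal (r1 - r0) + L \<delta> \<le> ereal (r1 - r0) + ereal r0" by (rule add_left_mono)
        also have "\<dots> = ereal r1" by simp
        finally show False using le r1(2) by simp
      qed
    qed
  qed
  have "Ps X T f x \<epsilon> = S" unfolding PsL by (rule tendsto_Lim[OF trivial_limit_at_right_real tends])
  then show ?thesis using RHS by simp
qed

end
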